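(* If $\lambda$ is a singular cardinal and $\clubsuit\square_\lambda$ holds, then $2^\lambda=\lambda^+$.
   Context: For a set of ordinals $A$: $\operatorname{acc}(A)=\{\alpha\in A:\sup(A\cap\alpha)=\alpha\}$; $\operatorname{otp}(A)$ is its order type; $A(i)$ is the unique $\beta\in A$ with $\operatorname{otp}(A\cap\beta)=i$. A $\square_\lambda$-sequence is $\langle C_\alpha:\alpha<\lambda^+\rangle$ such that for every limit $\alpha<\lambda^+$, $C_\alpha$ is a club in $\alpha$ of order type $\le\lambda$, and $\beta\in\operatorname{acc}(C_\alpha)$ implies $C_\beta=C_\alpha\cap\beta$. $\clubsuit\square_\lambda$ asserts the existence of a $\square_\lambda$-sequence $\langle C_\alpha\rangle$ such that for every sequence $\langle A_i:i<\lambda\rangle$ of unbounded subsets of $\lambda^+$, every limit $\theta<\lambda$ and every club $D\subseteq\lambda^+$, there is $\alpha<\lambda^+$ with $\operatorname{otp}(C_\alpha)=\theta$ such that for all $i<\theta$: $C_\alpha(i+1)\in A_i$, and $C_\alpha(i)<\beta<C_\alpha(i+1)$ for some $\beta\in D$. *)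

theory Defs
  imports Main
begin

unbundle cardinal_syntax

(* Ordinals below a cardinal are modelled as elements of the field of a well-order.
   lam :: 'a rel is a cardinal (card_order, field UNIV); lambda^+ is  cardSuc lam. *)

definition ltW :: "'a rel \<Rightarrow> 'a \<Rightarrow> 'a \<Rightarrow> bool" where
  "ltW W a b \<equiv> (a, b) \<in> W \<and> a \<noteq> b"

definition is_limit :: "'a rel \<Rightarrow> 'a \<Rightarrow> bool" where
  "is_limit W \<alpha> \<equiv> \<alpha> \<in> Field W \<and> (\<exists>\<gamma>. ltW W \<gamma> \<alpha>) \<and>
     (\<forall>\<gamma>. ltW W \<gamma> \<alpha> \<longrightarrow> (\<exists>\<delta>. ltW W \<gamma> \<delta> \<and> ltW W \<delta> \<alpha>))"

definition sup_eq :: "'a rel \<Rightarrow> 'a set \<Rightarrow> 'a \<Rightarrow> bool" where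
  "sup_eq W A \<alpha> \<equiv> \<forall>\<gamma>. ltW W \<gamma> \<alpha> \<longrightarrow> (\<exists>\<beta>\<in>A. ltW W \<gamma> \<beta> \<and> ltW W \<beta> \<alpha>)"

definition acc :: "'a rel \<Rightarrow> 'a set \<Rightarrow> 'a set" where
  "acc W A = {\<alpha> \<in> A. sup_eq W A \<alpha>}"

definition club_in :: "'a rel \<Rightarrow> 'a set \<Rightarrow> 'a \<Rightarrow> bool" where
  "club_in W C \<alpha> \<equiv> C \<subseteq> underS W \<alpha> \<and> (\<forall>\<gamma>. ltW W \<gamma> \<alpha> \<longrightarrow> (\<exists>\<beta>\<in>C. ltW W \<gamma> \<beta>)) \<and>
     (\<forall>\<gamma>. ltW W \<gamma> \<alpha> \<and> is_limit W \<gamma> \<and> sup_eq W C \<gamma> \<longrightarrow> \<gamma> \<in> C)"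

definition club :: "'a rel \<Rightarrow> 'a set \<Rightarrow> bool" where
  "club W D \<equiv> D \<subseteq> Field W \<and> (\<forall>\<gamma>\<in>Field W. \<exists>\<beta>\<in>D. ltW W \<gamma> \<beta>) \<and>
     (\<forall>\<gamma>\<in>Field W. is_limit W \<gamma> \<and> sup_eq W D \<gamma> \<longrightarrow> \<gamma> \<in> D)"

definition unbounded :: "'a rel \<Rightarrow> 'a set \<Rightarrow> bool" where
  "unbounded W A \<equiv> A \<subseteq> Field W \<and> (\<forall>\<gamma>\<in>Field W. \<exists>\<beta>\<in>A. ltW W \<gamma> \<beta>)"

(* C(i): the unique \<beta> \<in> C with otp(C \<inter> \<beta>) = i, where i is an ordinal of the well-order lam *)
definition nth_elem :: "'b rel \<Rightarrow> 'a rel \<Rightarrow> 'b set \<Rightarrow> 'a \<Rightarrow> 'b" where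
  "nth_elem W lam C i = (THE \<beta>. \<beta> \<in> C \<and> Restr W (C \<inter> underS W \<beta>) =o Restr lam (underS lam i))"

definition osucc :: "'a rel \<Rightarrow> 'a \<Rightarrow> 'a" where
  "osucc lam i = wo_rel.suc lam {i}"

definition square_seq :: "'a rel \<Rightarrow> ('a set \<Rightarrow> 'a set set) \<Rightarrow> bool" where
  "square_seq lam C \<equiv> \<forall>\<alpha>. is_limit (cardSuc lam) \<alpha> \<longrightarrow>
     club_in (cardSuc lam) (C \<alpha>) \<alpha> \<and> Restr (cardSuc lam) (C \<alpha>) \<le>o lam \<and>
     (\<forall>\<beta>\<in>acc (cardSuc lam) (C \<alpha>). C \<beta> = C \<alpha> \<inter> underS (cardSuc lam) \<beta>)"

definition clubsuit_square :: "'a rel \<Rightarrow> bool" where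
  "clubsuit_square lam \<equiv> \<exists>C. square_seq lam C \<and>
     (\<forall>(A :: 'a \<Rightarrow> 'a set set) \<theta> D.
        (\<forall>i. unbounded (cardSuc lam) (A i)) \<and> is_limit lam \<theta> \<and> club (cardSuc lam) D \<longrightarrow>
        (\<exists>\<alpha>\<in>Field (cardSuc lam).
           Restr (cardSuc lam) (C \<alpha>) =o Restr lam (underS lam \<theta>) \<and>
           (\<forall>i. ltW lam i \<theta> \<longrightarrow>
              nth_elem (cardSuc lam) lam (C \<alpha>) (osucc lam i) \<in> A i \<and>
              (\<exists>\<beta>\<in>D. ltW (cardSuc lam) (nth_elem (cardSuc lam) lam (C \<alpha>) i) \<beta> \<and>
                       ltW (cardSuc lam) \<beta> (nth_elem (cardSuc lam) lam (C \<alpha>) (osucc lam i))))))"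

end

theory Submission
  imports Defs
begin

lemma Field_Restr_underS_wo:
  assumes "Well_order r"
  shows "Field (Restr r (underS r a)) = underS r a"
  using assms wo_rel.underS_ofilter Field_Restr_ofilter unfolding wo_rel_def by fastforce

lemma big_unbounded:
  assumes L: "Card_order L" and inf: "\<not> finite (Field L)"
    and S: "S \<subseteq> Field L" and big: "|Field L| \<le>o |S|"
  shows "unbounded L S"
  unfolding unbounded_def
proof (intro conjI ballI)
  show "S \<subseteq> Field L" by fact
  fix \<gamma> assume g: "\<gamma> \<in> Field L"
  obtain \<gamma>' where g': "\<gamma>' \<in> Field L" "\<gamma> \<noteq> \<gamma>'" "(\<gamma>,\<gamma>') \<in> L"
    using infinite_Card_order_limit[OF L inf g] by blast
  show "\<exists>\<beta>\<in>S. ltW L \<gamma> \<beta>"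
  proof (rule ccontr)
    assume no: "\<not> ?thesis"
    have wo: "wo_rel L" using L unfolding card_order_on_def wo_rel_def by blast
    have "S \<subseteq> underS L \<gamma>'"
    proof
      fix \<beta> assume b: "\<beta> \<in> S"
      hence bF: "\<beta> \<in> Field L" using S by blast
      have nl: "\<not> ltW L \<gamma> \<beta>" using no b by blast
      have "(\<beta>,\<gamma>) \<in> L"
        using wo_rel.TOTALS[OF wo] bF g nl wo_rel.REFL[OF wo] unfolding ltW_def refl_on_def
        by blast
      hence "(\<beta>,\<gamma>') \<in> L" using g' wo_rel.TRANS[OF wo] unfolding trans_def by blast
      moreover have "\<beta> \<noteq> \<gamma>'" using nl g' unfolding ltW_def by blast
      ultimately show "\<beta> \<in> underS L \<gamma>'" unfolding underS_def by blast
    qed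
    hence "|S| \<le>o |underS L \<gamma>'|" by (rule card_of_mono1)
    moreover have "|underS L \<gamma>'| <o L" using card_of_underS[OF L g'(1)] .
    moreover have "L =o |Field L|" using card_of_Field_ordIso[OF L] ordIso_symmetric by blast
    ultimately have "|S| <o |Field L|"
      using ordLeq_ordLess_trans ordLess_ordIso_trans by blast
    thus False using big not_ordLess_ordLeq by blast
  qed
qed

lemma limit_exists:
  fixes lam :: "'a rel" and S :: "'b set"
  assumes C: "Card_order lam" and nat: "|UNIV::nat set| <o lam" and S: "|S| <o lam"
    and inf: "\<not> finite (Field lam)"
  shows "\<exists>\<theta>. is_limit lam \<theta> \<and> |S| \<le>o |underS lam \<theta>|"
proof -
  let ?T = "S <+> (UNIV::nat set)"
  have wo: "Well_order lam" using C unfolding card_order_on_def by blast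
  have T: "|?T| <o lam" using card_of_Plus_ordLess_infinite_Field[OF inf C S nat] .
  obtain \<theta> where th: "\<theta> \<in> Field lam" "|?T| =o Restr lam (underS lam \<theta>)"
    using T ordLess_iff_ordIso_Restr[OF wo card_of_Well_order] by blast
  let ?R = "Restr lam (underS lam \<theta>)"
  have FR: "Field ?R = underS lam \<theta>" using Field_Restr_underS_wo[OF wo] .
  have CR: "Card_order ?R" using th(2) ordIso_card_of_imp_Card_order ordIso_symmetric by blast
  have "|?T| =o |underS lam \<theta>|"
    using card_of_cong[OF th(2)] FR by (simp add: Field_card_of)
  hence TU: "|?T| \<le>o |underS lam \<theta>|" using ordIso_iff_ordLeq by blast
  have SU: "|S| \<le>o |underS lam \<theta>|" using card_of_Plus1 TU ordLeq_transitive by blast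
  have "\<not> finite ?T" by (simp add: finite_Plus_iff)
  hence infU: "\<not> finite (underS lam \<theta>)" using TU card_of_ordLeq_finite by blast
  have lim: "is_limit lam \<theta>"
    unfolding is_limit_def
  proof (intro conjI allI impI)
    show "\<theta> \<in> Field lam" by fact
    obtain \<gamma> where "\<gamma> \<in> underS lam \<theta>" using infU by (metis finite.emptyI ex_in_conv)
    thus "\<exists>\<gamma>. ltW lam \<gamma> \<theta>" unfolding ltW_def underS_def by blast
  next
    fix \<gamma> assume g: "ltW lam \<gamma> \<theta>"
    hence gU: "\<gamma> \<in> Field ?R" using FR unfolding ltW_def underS_def by blast
    obtain \<delta> where "\<delta> \<in> Field ?R" "\<gamma> \<noteq> \<delta>" "(\<gamma>,\<delta>) \<in> ?R"
      using infinite_Card_order_limit[OF CR _ gU] infU FR by auto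
    thus "\<exists>\<delta>. ltW lam \<gamma> \<delta> \<and> ltW lam \<delta> \<theta>" using FR unfolding ltW_def underS_def by blast
  qed
  show ?thesis using lim SU by blast
qed

theorem proposition3p4:
  fixes lam :: "'a rel"
  assumes "card_order lam"
    and "\<not> finite (UNIV :: 'a set)"
    and "\<not> regularCard lam"
    and "clubsuit_square lam"
  shows "(card_of (Pow (UNIV :: 'a set)), cardSuc lam) \<in> ordIso"
proof -
  have Clam: "Card_order lam" and Flam: "Field lam = UNIV"
    using card_order_on_Card_order[OF assms(1)] by auto
  have infl: "\<not> finite (Field lam)" using Flam assms(2) by simp
  define L where "L = cardSuc lam"
  define F where "F = Field L"
  have CL: "Card_order L" unfolding L_def using cardSuc_Card_order[OF Clam] .
  have "|Field lam| \<le>o |F|" unfolding F_def L_def using card_of_mono2[OF cardSuc_ordLeq[OF Clam]] .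
  hence infF: "\<not> finite F" using infl card_of_ordLeq_finite by blast
  have LF: "L =o |F|" unfolding F_def using card_of_Field_ordIso[OF CL] ordIso_symmetric by blast
  have "|F \<times> F| \<le>o L" unfolding F_def using Card_order_Times_same_infinite[OF CL] infF F_def by blast
  hence "|F \<times> F| \<le>o |F|" using LF ordLeq_ordIso_trans by blast
  then obtain g where g: "inj_on g (F \<times> F)" "g ` (F \<times> F) \<subseteq> F"
    unfolding card_of_ordLeq[symmetric] by blast
  define B where "B \<xi> = g ` ({\<xi>} \<times> F)" for \<xi>
  have unbB: "unbounded L (B \<xi>)" if "\<xi> \<in> F" for \<xi>
  proof -
    have "inj_on (\<lambda>\<beta>. g (\<xi>,\<beta>)) F \<and> (\<lambda>\<beta>. g (\<xi>,\<beta>)) ` F \<subseteq> B \<xi>"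
      using g(1) that unfolding B_def inj_on_def by auto
    hence "|F| \<le>o |B \<xi>|" using card_of_ordLeq by blast
    moreover have "B \<xi> \<subseteq> F" using g(2) that unfolding B_def by auto
    ultimately show ?thesis using big_unbounded[OF CL] infF F_def by blast
  qed
  have disjB: "\<xi> = \<xi>'" if "\<xi> \<in> F" "\<xi>' \<in> F" "x \<in> B \<xi>" "x \<in> B \<xi>'" for \<xi> \<xi>' x
    using that g(1) unfolding B_def inj_on_def by auto
  have unbF: "unbounded L F"
    using big_unbounded[OF CL] infF F_def card_of_mono1[of F F] by blast
  have clubF: "club L F"
    unfolding club_def using unbF unfolding unbounded_def F_def by blast
  obtain C where Csq: "square_seq lam C" and
    Cg: "\<And>(A :: 'a \<Rightarrow> 'a set set) \<theta> D.
        (\<forall>i. unbounded (cardSuc lam) (A i)) \<and> is_limit lam \<theta> \<and> club (cardSuc lam) D \<Longrightarrow>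
        (\<exists>\<alpha>\<in>Field (cardSuc lam).
           Restr (cardSuc lam) (C \<alpha>) =o Restr lam (underS lam \<theta>) \<and>
           (\<forall>i. ltW lam i \<theta> \<longrightarrow>
              nth_elem (cardSuc lam) lam (C \<alpha>) (osucc lam i) \<in> A i \<and>
              (\<exists>\<beta>\<in>D. ltW (cardSuc lam) (nth_elem (cardSuc lam) lam (C \<alpha>) i) \<beta> \<and>
                       ltW (cardSuc lam) \<beta> (nth_elem (cardSuc lam) lam (C \<alpha>) (osucc lam i)))))"
    using assms(4) unfolding clubsuit_square_def by blast
  define Aof where "Aof s i = (if s i \<in> F then B (s i) else F)" for s :: "'a \<Rightarrow> 'a set" and i
  define guess where "guess \<theta> s = (SOME \<alpha>. \<alpha> \<in> F \<and>
      (\<forall>i. ltW lam i \<theta> \<longrightarrow> nth_elem L lam (C \<alpha>) (osucc lam i) \<in> Aof s i))" for \<theta> s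
  have gx: "guess \<theta> s \<in> F \<and>
      (\<forall>i. ltW lam i \<theta> \<longrightarrow> nth_elem L lam (C (guess \<theta> s)) (osucc lam i) \<in> Aof s i)"
    if "is_limit lam \<theta>" for \<theta> s
  proof -
    have "\<forall>i. unbounded L (Aof s i)" using unbB unbF unfolding Aof_def by auto
    hence "\<exists>\<alpha>. \<alpha> \<in> F \<and>
      (\<forall>i. ltW lam i \<theta> \<longrightarrow> nth_elem L lam (C \<alpha>) (osucc lam i) \<in> Aof s i)"
      using Cg[of "Aof s" \<theta> F] that clubF unfolding L_def F_def by blast
    thus ?thesis unfolding guess_def by (rule someI_ex)
  qed
  have ginj: "s i = s' i"
    if "is_limit lam \<theta>" "guess \<theta> s = guess \<theta> s'" "ltW lam i \<theta>" "s i \<in> F" "s' i \<in> F"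
    for \<theta> s s' i
  proof -
    have "nth_elem L lam (C (guess \<theta> s)) (osucc lam i) \<in> B (s i)"
      using gx[OF that(1), of s] that(3,4) unfolding Aof_def by auto
    moreover have "nth_elem L lam (C (guess \<theta> s)) (osucc lam i) \<in> B (s' i)"
      using gx[OF that(1), of s'] that(2,3,5) unfolding Aof_def by auto
    ultimately show ?thesis using disjB that(4,5) by blast
  qed
  obtain \<xi>0 where x0: "\<xi>0 \<in> F" using infF by (metis finite.emptyI ex_in_conv)
  obtain \<xi>1 where x1: "\<xi>1 \<in> F" "\<xi>0 \<noteq> \<xi>1"
    using infinite_Card_order_limit[OF CL _ x0[unfolded F_def]] infF F_def by blast
  have natle: "|UNIV::nat set| \<le>o lam"
    using infinite_iff_card_of_nat[of "UNIV::'a set"] assms(2) card_of_Field_ordIso[OF Clam] Flam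
      ordLeq_ordIso_trans by fastforce
  have natless: "|UNIV::nat set| <o lam"
  proof -
    have "\<not> ( |UNIV::nat set| =o lam)"
    proof
      assume "|UNIV::nat set| =o lam"
      hence "natLeq =o lam" using card_of_nat ordIso_symmetric ordIso_transitive by blast
      hence "regularCard lam" using regularCard_ordIso natLeq_Cinfinite regularCard_natLeq by blast
      thus False using assms(3) by blast
    qed
    thus ?thesis using natle ordLeq_iff_ordLess_or_ordIso by blast
  qed
  obtain K where K: "K \<subseteq> Field lam" "cofinal K lam" "\<not> |K| =o lam"
    using assms(3) unfolding regularCard_def by blast
  have "|K| \<le>o lam"
    using card_of_mono1[of K "UNIV::'a set"] card_of_Field_ordIso[OF Clam] Flam
      ordLeq_ordIso_trans by fastforce
  hence Kl: "|K| <o lam" using K(3) ordLeq_iff_ordLess_or_ordIso by blast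
  have lim1: "\<exists>\<theta>. is_limit lam \<theta> \<and> (\<exists>e. inj_on e (underS lam k) \<and> e ` underS lam k \<subseteq> underS lam \<theta>)"
    for k
  proof -
    have "|underS lam k| <o lam" using card_of_underS[OF Clam] Flam by blast
    then obtain \<theta> where "is_limit lam \<theta>" "|underS lam k| \<le>o |underS lam \<theta>|"
      using limit_exists[OF Clam natless _ infl] by blast
    thus ?thesis unfolding card_of_ordLeq[symmetric] by blast
  qed
  have "\<exists>th. \<forall>k. is_limit lam (th k) \<and>
      (\<exists>e. inj_on e (underS lam k) \<and> e ` underS lam k \<subseteq> underS lam (th k))"
    by (rule choice) (rule allI, rule lim1)
  then obtain th where th0: "\<forall>k. is_limit lam (th k) \<and>
      (\<exists>e. inj_on e (underS lam k) \<and> e ` underS lam k \<subseteq> underS lam (th k))"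
    by (elim exE)
  have thl: "is_limit lam (th k)" for k using th0 by blast
  have "\<exists>ee. \<forall>k. inj_on (ee k) (underS lam k) \<and> ee k ` underS lam k \<subseteq> underS lam (th k)"
    by (rule choice) (use th0 in blast)
  then obtain ee where ee0: "\<forall>k. inj_on (ee k) (underS lam k) \<and> ee k ` underS lam k \<subseteq> underS lam (th k)"
    by (elim exE)
  have ee: "inj_on (ee k) (underS lam k)" "ee k ` underS lam k \<subseteq> underS lam (th k)" for k
    using ee0 by blast+
  define code1 where "code1 k Y = guess (th k)
      (\<lambda>i. if \<exists>a\<in>Y \<inter> underS lam k. ee k a = i then \<xi>1 else \<xi>0)" for k Y
  have c1F: "code1 k Y \<in> F" for k Y
    unfolding code1_def using gx thl by blast
  have c1inj: "Y \<inter> underS lam k = Y' \<inter> underS lam k" if "code1 k Y = code1 k Y'" for k Y Y'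
  proof -
    { fix a assume a: "a \<in> underS lam k"
      let ?s = "\<lambda>Y i. if \<exists>a\<in>Y \<inter> underS lam k. ee k a = i then \<xi>1 else \<xi>0"
      have lt: "ltW lam (ee k a) (th k)" using ee(2)[of k] a unfolding ltW_def underS_def by blast
      have eq: "?s Y (ee k a) = ?s Y' (ee k a)"
        using ginj[of "th k" "?s Y" "?s Y'" "ee k a"] thl that lt x0 x1 unfolding code1_def by auto
      have "(\<exists>a'\<in>Z \<inter> underS lam k. ee k a' = ee k a) \<longleftrightarrow> a \<in> Z" for Z
        using ee(1)[of k] a unfolding inj_on_def by blast
      hence "a \<in> Y \<longleftrightarrow> a \<in> Y'" using eq x1(2) by (metis (no_types, lifting))
    }
    thus ?thesis by blast
  qed
  obtain \<theta>s where ths: "is_limit lam \<theta>s" "|K| \<le>o |underS lam \<theta>s|"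
    using limit_exists[OF Clam natless Kl infl] by blast
  then obtain es where es: "inj_on es K" "es ` K \<subseteq> underS lam \<theta>s"
    unfolding card_of_ordLeq[symmetric] by blast
  define code where "code X = guess \<theta>s
      (\<lambda>i. if i \<in> es ` K then code1 (the_inv_into K es i) X else \<xi>0)" for X
  have "inj_on code (Pow UNIV)"
  proof (rule inj_onI)
    fix X X' assume eq: "code X = code X'"
    { fix k assume k: "k \<in> K"
      let ?s = "\<lambda>X i. if i \<in> es ` K then code1 (the_inv_into K es i) X else \<xi>0"
      have lt: "ltW lam (es k) \<theta>s" using es k unfolding ltW_def underS_def by blast
      have "?s X (es k) = ?s X' (es k)"
        using ginj[of \<theta>s "?s X" "?s X'" "es k"] ths eq lt c1F x0 unfolding code_def by auto
      hence "code1 k X = code1 k X'" using k the_inv_into_f_f[OF es(1) k] by auto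
      hence "X \<inter> underS lam k = X' \<inter> underS lam k" using c1inj by blast }
    note * = this
    show "X = X'"
    proof (rule set_eqI)
      fix a
      obtain k where "k \<in> K" "a \<noteq> k" "(a,k) \<in> lam"
        using K(2) Flam unfolding cofinal_def by blast
      hence "a \<in> underS lam k" "k \<in> K" unfolding underS_def by auto
      thus "a \<in> X \<longleftrightarrow> a \<in> X'" using * by blast
    qed
  qed
  moreover have "code ` Pow UNIV \<subseteq> F" unfolding code_def using gx ths by blast
  ultimately have "|Pow (UNIV::'a set)| \<le>o |F|" using card_of_ordLeq by blast
  hence le1: "|Pow (UNIV::'a set)| \<le>o L" using LF ordIso_symmetric ordLeq_ordIso_trans by blast
  have "lam <o |Pow (UNIV::'a set)|"
    using card_of_Pow[of "UNIV::'a set"] card_of_Field_ordIso[OF Clam] Flam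
      ordIso_ordLess_trans ordIso_symmetric by fastforce
  hence le2: "L \<le>o |Pow (UNIV::'a set)|"
    unfolding L_def using cardSuc_least[OF Clam card_of_Card_order] by blast
  show ?thesis using le1 le2 ordIso_iff_ordLeq unfolding L_def by blast
qed

end
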